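(* Let $\mathcal{X}=\mathcal{Y}=\mathbb{R}$ and let $\ell^{\mathrm{obj}}(y,y')=\ell^{\mathrm{con}}(y,y')=(y-y')^2$. Let $\ell^{\mathrm{a}}:\mathbb{R}\times\mathbb{R}\to\mathbb{R}$ be a p-distance function, i.e. $\ell^{\mathrm{a}}(y,y')\ge 0$ for all $y,y'$, and $\ell^{\mathrm{a}}(y,y')=0$ if and only if $y=y'$. Let $Q$ and $P$ be absolutely continuous probability measures on $\mathbb{R}$ with $\operatorname{supp}(Q)=[a,b]$ and $\operatorname{supp}(P)=[c,d]$, where $a<b\le c<d$. Let $F$ and $H$ be $L$-Lipschitz function spaces (classes of $L$-Lipschitz functions $\mathbb{R}\to\mathbb{R}$), and let $G=\{g:\mathbb{R}\to\mathbb{R}\}$ be the set of all functions. Let $\varepsilon\ge 0$ and $f\in F$. Consider the expected BODAME problem $$\max_{g\in G}\ \mathbb{E}_{X\sim Q}\big[\ell^{\mathrm{obj}}(f(X),h_g(X))\big]$$ subject to $h_g=\operatorname{argmin}_{h\in H}\mathbb{E}_{X\sim P}[\ell^{\mathrm{a}}(g(X),h(X))]$ and $\mathbb{E}_{X\sim Q}[\ell^{\mathrm{con}}(f(X),g(X))]\le\varepsilon$. Then the optimal value of this problem is $\infty$.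
   Context: In this problem a defender with true model $f$ publishes a surrogate model $g$, which must approximate $f$ up to $\varepsilon$ on the defender's distribution $Q$; an attacker fits a model $h_g\in H$ to the outputs of $g$ by minimizing the expected loss $\ell^{\mathrm{a}}$ on the attacker's distribution $P$; the defender maximizes the expected discrepancy between $f$ and $h_g$ on $Q$. "Optimal value is $\infty$" means the supremum of the objective over feasible $g$ is $+\infty$. *)

theory Defs
  imports "HOL-Probability.Probability"
begin

definition measure_support :: "real measure \<Rightarrow> real set" where
  "measure_support M = {x. \<forall>e>0. emeasure M (ball x e) > 0}"

definition lip_space :: "real \<Rightarrow> (real \<Rightarrow> real) set" where
  "lip_space L = {h. L-lipschitz_on UNIV h}"

definition exp_loss :: "real measure \<Rightarrow> (real \<Rightarrow> real \<Rightarrow> real) \<Rightarrow> (real \<Rightarrow> real) \<Rightarrow> (real \<Rightarrow> real) \<Rightarrow> ennreal" where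
  "exp_loss M loss u v = (\<integral>\<^sup>+ x. ennreal (loss (u x) (v x)) \<partial>M)"

definition attacker_argmin :: "(real \<Rightarrow> real) set \<Rightarrow> real measure \<Rightarrow> (real \<Rightarrow> real \<Rightarrow> real) \<Rightarrow> (real \<Rightarrow> real) \<Rightarrow> (real \<Rightarrow> real) set" where
  "attacker_argmin H P la g = {h \<in> H. \<forall>h' \<in> H. exp_loss P la g h \<le> exp_loss P la g h'}"

definition sq_loss :: "real \<Rightarrow> real \<Rightarrow> real" where
  "sq_loss y y' = (y - y')\<^sup>2"

end

theory Submission
  imports Defs
begin

lemma supp_AE:
  fixes M :: "real measure"
  assumes S: "sets M = sets borel"
  shows "AE x in M. x \<in> measure_support M"
proof -
  define F where "F = {ball x e | x e. e > 0 \<and> emeasure M (ball x e) = 0}"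
  have "\<And>S. S \<in> F \<Longrightarrow> open S" by (auto simp: F_def)
  from Lindelof[OF this] obtain F' where F': "F' \<subseteq> F" "countable F'" "\<Union>F' = \<Union>F" by blast
  have "(\<Union>i\<in>F'. i) \<in> null_sets M"
  proof (rule null_sets_UN')
    show "countable F'" by fact
    fix i assume "i \<in> F'"
    then have "i \<in> F" using F' by blast
    then obtain x e where i: "i = ball x e" "emeasure M (ball x e) = 0"
      unfolding F_def by blast
    have "ball x e \<in> sets M" using S by simp
    then show "i \<in> null_sets M" using i by (simp add: null_sets_def)
  qed
  then have N: "\<Union>F' \<in> null_sets M" by simp
  show ?thesis
  proof (rule AE_I'[OF N])
    show "{x \<in> space M. x \<notin> measure_support M} \<subseteq> \<Union>F'"
    proof
      fix x assume "x \<in> {x \<in> space M. x \<notin> measure_support M}"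
      then obtain e where "e > 0" "\<not> emeasure M (ball x e) > 0"
        by (auto simp: measure_support_def)
      then have "emeasure M (ball x e) = 0" by (simp add: not_less)
      then have "ball x e \<in> F" unfolding F_def using \<open>e > 0\<close> by blast
      moreover have "x \<in> ball x e" using \<open>e > 0\<close> by simp
      ultimately have "x \<in> \<Union>F" by blast
      then show "x \<in> \<Union>F'" using F'(3) by simp
    qed
  qed
qed

theorem theorem2:
  fixes la :: "real \<Rightarrow> real \<Rightarrow> real"
    and Q P :: "real measure"
    and a b c d L \<epsilon> :: real
    and f :: "real \<Rightarrow> real"
  assumes la_nonneg: "\<And>y y'. la y y' \<ge> 0"
    and la_zero: "\<And>y y'. la y y' = 0 \<longleftrightarrow> y = y'"
    and la_meas: "(\<lambda>(y, y'). la y y') \<in> borel_measurable borel"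
    and Q_prob: "prob_space Q" and Q_sets: "sets Q = sets borel"
    and Q_ac: "absolutely_continuous lborel Q"
    and P_prob: "prob_space P" and P_sets: "sets P = sets borel"
    and P_ac: "absolutely_continuous lborel P"
    and Q_supp: "measure_support Q = {a..b}"
    and P_supp: "measure_support P = {c..d}"
    and abcd: "a < b" "b \<le> c" "c < d"
    and eps: "\<epsilon> \<ge> 0"
    and f_in: "f \<in> lip_space L"
  shows "\<forall>M::real. \<exists>g :: real \<Rightarrow> real.
           exp_loss Q sq_loss f g \<le> ennreal \<epsilon>
         \<and> attacker_argmin (lip_space L) P la g \<noteq> {}
         \<and> (\<forall>h \<in> attacker_argmin (lip_space L) P la g. exp_loss Q sq_loss f h > ennreal M)"
proof
  fix M :: real
  have la_refl: "\<And>y. la y y = 0" using la_zero by simp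
  have fL: "L-lipschitz_on UNIV f" using f_in by (simp add: lip_space_def)
  have L0: "0 \<le> L" using lipschitz_on_nonneg[OF fL] .
  have fcont: "continuous_on UNIV f" using lipschitz_on_continuous_on[OF fL] .
  have fmeas: "f \<in> borel_measurable borel" using borel_measurable_continuous_onI[OF fcont] .
  define K where "K = 2 * L * (c - a) + sqrt \<bar>M\<bar> + 1"
  define g where "g = (\<lambda>x. f x + K * indicator {b<..} x)"
  have gmeas: "g \<in> borel_measurable borel" unfolding g_def
    using fmeas by (intro borel_measurable_add borel_measurable_times borel_measurable_const borel_measurable_indicator) auto
  define h0 where "h0 = (\<lambda>x. f x + K)"
  have h0L: "h0 \<in> lip_space L" using fL
    by (auto simp: lip_space_def h0_def lipschitz_on_def dist_real_def)
  have bnullP: "{b} \<in> null_sets P"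
  proof -
    have "{b} \<in> null_sets lborel" by (simp add: null_sets_def)
    then show ?thesis using P_ac by (auto simp: absolutely_continuous_def)
  qed
  have AEP: "AE x in P. x \<in> {c..d} \<and> x \<noteq> b"
  proof -
    have "AE x in P. x \<in> {c..d}" using supp_AE[OF P_sets] P_supp by simp
    moreover have "AE x in P. x \<notin> {b}" using AE_not_in[OF bnullP] .
    ultimately show ?thesis by eventually_elim auto
  qed
  have AEP2: "AE x in P. g x = h0 x"
    using AEP
  proof eventually_elim
    case (elim x)
    then have "x > b" using abcd by auto
    then show ?case by (simp add: g_def h0_def indicator_def)
  qed
  have AEQ: "AE x in Q. x \<in> {a..b}" using supp_AE[OF Q_sets] Q_supp by simp
  have meas_la: "(\<lambda>x. ennreal (la (g x) (h x))) \<in> borel_measurable P"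
    if "h \<in> borel_measurable borel" for h
  proof -
    have "(\<lambda>x. (\<lambda>(y, y'). la y y') (g x, h x)) \<in> borel_measurable borel"
        by (rule measurable_compose[OF borel_measurable_Pair[OF gmeas that] la_meas])
    then have "(\<lambda>x. la (g x) (h x)) \<in> borel_measurable borel" by simp
    then have "(\<lambda>x. ennreal (la (g x) (h x))) \<in> borel_measurable borel"
      by (rule measurable_compose[OF _ measurable_ennreal])
    then show ?thesis by (subst measurable_cong_sets[OF P_sets refl])
  qed
  have h0zero: "exp_loss P la g h0 = 0"
  proof -
    have ae0: "AE x in P. ennreal (la (g x) (h0 x)) = 0"
      using AEP2 by eventually_elim (simp add: la_refl)
    show ?thesis unfolding exp_loss_def by (subst nn_integral_cong_AE[OF ae0]) simp
  qed
  have argmin: "h \<in> attacker_argmin (lip_space L) P la g \<longleftrightarrow> h \<in> lip_space L \<and> exp_loss P la g h = 0" for h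
  proof
    assume "h \<in> attacker_argmin (lip_space L) P la g"
    then have "h \<in> lip_space L" "exp_loss P la g h \<le> exp_loss P la g h0"
      using h0L unfolding attacker_argmin_def by blast+
    then show "h \<in> lip_space L \<and> exp_loss P la g h = 0" using h0zero by simp
  next
    assume "h \<in> lip_space L \<and> exp_loss P la g h = 0"
    then show "h \<in> attacker_argmin (lip_space L) P la g"
      unfolding attacker_argmin_def by simp
  qed
  show "\<exists>g. exp_loss Q sq_loss f g \<le> ennreal \<epsilon>
         \<and> attacker_argmin (lip_space L) P la g \<noteq> {}
         \<and> (\<forall>h \<in> attacker_argmin (lip_space L) P la g. exp_loss Q sq_loss f h > ennreal M)"
  proof (intro exI conjI ballI)
    have "exp_loss Q sq_loss f g = 0"
    proof -
      have ae0: "AE x in Q. ennreal (sq_loss (f x) (g x)) = 0"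
        using AEQ by eventually_elim (simp add: sq_loss_def g_def indicator_def)
      show ?thesis unfolding exp_loss_def by (subst nn_integral_cong_AE[OF ae0]) simp
    qed
    then show "exp_loss Q sq_loss f g \<le> ennreal \<epsilon>" by simp
    show "attacker_argmin (lip_space L) P la g \<noteq> {}" using argmin h0zero h0L by blast
  next
    fix h assume "h \<in> attacker_argmin (lip_space L) P la g"
    then have hL': "h \<in> lip_space L" and hz: "exp_loss P la g h = 0" using argmin by auto
    have hL: "L-lipschitz_on UNIV h" using hL' by (simp add: lip_space_def)
    have hcont: "continuous_on UNIV h" using lipschitz_on_continuous_on[OF hL] .
    have hmeas: "h \<in> borel_measurable borel" using borel_measurable_continuous_onI[OF hcont] .
    have "AE x in P. ennreal (la (g x) (h x)) = 0"
      using hz nn_integral_0_iff_AE[OF meas_la[OF hmeas]] by (simp add: exp_loss_def)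
    then have AEh: "AE x in P. h x = h0 x" using AEP2
    proof eventually_elim
      case (elim x)
      have "la (g x) (h x) \<le> 0" using elim(1) by (simp add: ennreal_eq_0_iff)
      then have "la (g x) (h x) = 0" using la_nonneg[of "g x" "h x"] by linarith
      then have "g x = h x" using la_zero by blast
      then show ?case using elim(2) by simp
    qed
    have hc: "h c = h0 c"
    proof (rule ccontr)
      assume ne: "h c \<noteq> h0 c"
      have h0cont: "continuous_on UNIV h0" unfolding h0_def using fcont by (intro continuous_intros)
      have "continuous_on UNIV (\<lambda>x. h x - h0 x)" using hcont h0cont by (intro continuous_intros)
      then have op: "open ((\<lambda>x. h x - h0 x) -` (- {0}))"
        by (rule open_vimage[OF open_Compl[OF closed_singleton]])
      have cin: "c \<in> (\<lambda>x. h x - h0 x) -` (- {0})" using ne by simp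
      obtain e where e: "e > 0" "ball c e \<subseteq> (\<lambda>x. h x - h0 x) -` (- {0})"
        using op cin unfolding open_contains_ball by blast
      from AEh obtain N where N: "N \<in> null_sets P" "{x \<in> space P. \<not> h x = h0 x} \<subseteq> N"
        by (auto simp: eventually_ae_filter)
      have sp: "space P = UNIV" using P_sets sets_eq_imp_space_eq by fastforce
      have "ball c e \<subseteq> N"
      proof
        fix x assume "x \<in> ball c e"
        then have "h x \<noteq> h0 x" using e(2) by auto
        then show "x \<in> N" using N(2) sp by auto
      qed
      then have "emeasure P (ball c e) \<le> emeasure P N"
        using N by (intro emeasure_mono) auto
      then have "emeasure P (ball c e) = 0" using N by auto
      moreover have "c \<in> measure_support P" using P_supp abcd by simp
      ultimately show False using e by (auto simp: measure_support_def)
    qed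
    have bound: "(sqrt \<bar>M\<bar> + 1) \<le> \<bar>f x - h x\<bar>" if x: "x \<in> {a..b}" for x
    proof -
      have d1: "\<bar>h x - h c\<bar> \<le> L * (c - a)"
      proof -
        have "\<bar>h x - h c\<bar> \<le> L * \<bar>x - c\<bar>" using lipschitz_onD[OF hL, of x c] by (simp add: dist_real_def)
        also have "\<dots> \<le> L * (c - a)" using x abcd L0 by (intro mult_left_mono) auto
        finally show ?thesis .
      qed
      have d2: "\<bar>f x - f c\<bar> \<le> L * (c - a)"
      proof -
        have "\<bar>f x - f c\<bar> \<le> L * \<bar>x - c\<bar>" using lipschitz_onD[OF fL, of x c] by (simp add: dist_real_def)
        also have "\<dots> \<le> L * (c - a)" using x abcd L0 by (intro mult_left_mono) auto
        finally show ?thesis .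
      qed
      have "h c = f c + K" using hc by (simp add: h0_def)
      then show ?thesis using d1 d2 unfolding K_def by linarith
    qed
    have sq: "ennreal (\<bar>M\<bar> + 1) \<le> ennreal (sq_loss (f x) (h x))" if x: "x \<in> {a..b}" for x
    proof -
      have s0: "0 \<le> sqrt \<bar>M\<bar>" by simp
      have ss: "sqrt \<bar>M\<bar> * sqrt \<bar>M\<bar> = \<bar>M\<bar>" by simp
      have "(sqrt \<bar>M\<bar> + 1)^2 = sqrt \<bar>M\<bar> * sqrt \<bar>M\<bar> + 2 * sqrt \<bar>M\<bar> + 1"
        by (simp add: power2_eq_square algebra_simps)
      then have "\<bar>M\<bar> + 1 \<le> (sqrt \<bar>M\<bar> + 1)^2" using s0 ss by linarith
      also have "\<dots> \<le> \<bar>f x - h x\<bar>^2"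
        using bound[OF x] by (intro power_mono) auto
      finally have "\<bar>M\<bar> + 1 \<le> sq_loss (f x) (h x)" by (simp add: sq_loss_def)
      then show ?thesis by (rule ennreal_leI)
    qed
    have "ennreal (\<bar>M\<bar> + 1) = (\<integral>\<^sup>+ x. ennreal (\<bar>M\<bar> + 1) \<partial>Q)"
      using prob_space.emeasure_space_1[OF Q_prob] by simp
    also have "\<dots> \<le> exp_loss Q sq_loss f h"
      unfolding exp_loss_def using AEQ by (intro nn_integral_mono_AE) (elim AE_mp, intro AE_I2 impI, rule sq)
    finally have "ennreal (\<bar>M\<bar> + 1) \<le> exp_loss Q sq_loss f h" .
    moreover have "ennreal M < ennreal (\<bar>M\<bar> + 1)"
      by (rule ennreal_lessI) auto
    ultimately show "exp_loss Q sq_loss f h > ennreal M" by order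
  qed
qed

end
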